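(* For every integer $n\ge 2$, the functional $$H_n=\sum_{i=1}^{n-1}\sum_{j=1}^{n-i}e_{i,j}^*\in\mathfrak{gl}(n)^*$$ is regular on $\mathfrak{gl}(n)$, i.e. $\dim\ker(B_{H_n})=n$.
   Context: Over $\mathbb{C}$. $e_{i,j}^*(X)=X_{i,j}$. For $f\in\mathfrak{g}^*$, $B_f(x,y)=f([x,y])$ and $\ker(B_f)=\{x\in\mathfrak{g}: f([x,y])=0\ \forall y\in\mathfrak{g}\}$. $f$ is regular if $\dim\ker(B_f)=\min_{g\in\mathfrak{g}^*}\dim\ker(B_g)$; for $\mathfrak{gl}(n)$ this minimum equals $n$. *)

theory Defs
  imports Main "HOL-Library.Function_Algebras" "HOL-Analysis.Analysis"
begin

text \<open>Elements of gl(n) over the complex numbers are represented as functions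
  nat => nat => complex, indices 1..n, vanishing outside {1..n} x {1..n}.\<close>

type_synonym cmat = "nat \<Rightarrow> nat \<Rightarrow> complex"

definition gl :: "nat \<Rightarrow> cmat set" where
  "gl n = {X. \<forall>i j. (i \<notin> {1..n} \<or> j \<notin> {1..n}) \<longrightarrow> X i j = 0}"

definition mat_mult :: "nat \<Rightarrow> cmat \<Rightarrow> cmat \<Rightarrow> cmat" where
  "mat_mult n X Y = (\<lambda>i j. \<Sum>k=1..n. X i k * Y k j)"

definition bracket :: "nat \<Rightarrow> cmat \<Rightarrow> cmat \<Rightarrow> cmat" where
  "bracket n X Y = mat_mult n X Y - mat_mult n Y X"

definition mscale :: "complex \<Rightarrow> cmat \<Rightarrow> cmat" where
  "mscale c X = (\<lambda>i j. c * X i j)"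

definition estar :: "nat \<Rightarrow> nat \<Rightarrow> cmat \<Rightarrow> complex" where
  "estar i j X = X i j"

definition kerB :: "nat \<Rightarrow> (cmat \<Rightarrow> complex) \<Rightarrow> cmat set" where
  "kerB n f = {X \<in> gl n. \<forall>Y \<in> gl n. f (bracket n X Y) = 0}"

definition H :: "nat \<Rightarrow> cmat \<Rightarrow> complex" where
  "H n = (\<lambda>X. \<Sum>i=1..n-1. \<Sum>j=1..n-i. estar i j X)"

end

theory Submission
  imports Defs
begin


definition Am :: "nat \<Rightarrow> cmat" where
  "Am n i j = (if 1 \<le> i \<and> 1 \<le> j \<and> i + j \<le> n then 1 else 0)"
definition Pm :: "nat \<Rightarrow> cmat" where
  "Pm n i j = (if 1 \<le> i \<and> i \<le> n - 1 \<and> j = n - i then 1 else 0)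
            - (if 2 \<le> i \<and> i \<le> n - 1 \<and> j = n + 1 - i then 1 else 0)"
definition Idm :: "nat \<Rightarrow> cmat" where
  "Idm n i j = (if 1 \<le> i \<and> i \<le> n - 1 \<and> j = i then 1 else 0)"
definition Em :: "nat \<Rightarrow> nat \<Rightarrow> cmat" where
  "Em a b i j = (if i = a \<and> j = b then 1 else 0)"

lemma sum_single:
  fixes n t :: nat
  assumes "\<And>l. l \<in> {1..n} \<Longrightarrow> l \<noteq> t \<Longrightarrow> g l = (0::complex)"
  shows "(\<Sum>l=1..n. g l) = (if 1 \<le> t \<and> t \<le> n then g t else 0)"
proof (cases "t \<in> {1..n}")
  case True
  then have "(\<Sum>l=1..n. g l) = g t + (\<Sum>l\<in>{1..n} - {t}. g l)"
    by (meson True finite_atLeastAtMost sum.remove)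
  also have "(\<Sum>l\<in>{1..n} - {t}. g l) = 0" using assms by (intro sum.neutral) auto
  finally show ?thesis using True by simp
next
  case False
  then have "(\<Sum>l=1..n. g l) = 0" using assms by (intro sum.neutral) auto
  then show ?thesis using False by auto
qed

lemma sum_if_eq:
  fixes n t :: nat shows
  "(\<Sum>l=1..n. (if c \<and> l = t then 1 else 0) * (y l::complex)) = (if c \<and> 1 \<le> t \<and> t \<le> n then y t else 0)"
  by (subst sum_single[where t=t]) auto

lemma sum_if_eq':
  fixes n t :: nat shows
  "(\<Sum>l=1..n. (y l::complex) * (if c \<and> l = t then 1 else 0)) = (if c \<and> 1 \<le> t \<and> t \<le> n then y t else 0)"
  using sum_if_eq[of c t y n] by (simp add: mult.commute)

lemma Pm_sym: "n \<ge> 2 \<Longrightarrow> Pm n i j = Pm n j i"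
  unfolding Pm_def by (rule arg_cong2[where f="(-)"]) auto

lemma Pm_row:
  assumes "n \<ge> 2"
  shows "(\<Sum>l=1..n. Pm n i l * y l) = (if 1 \<le> i \<and> i \<le> n - 1 then y (n - i) else 0)
      - (if 2 \<le> i \<and> i \<le> n - 1 then y (n + 1 - i) else 0)"
proof -
  have "(\<Sum>l=1..n. Pm n i l * y l) = (\<Sum>l=1..n. (if 1 \<le> i \<and> i \<le> n - 1 \<and> l = n - i then 1 else 0) * y l)
     - (\<Sum>l=1..n. (if 2 \<le> i \<and> i \<le> n - 1 \<and> l = n + 1 - i then 1 else 0) * y l)"
    unfolding Pm_def by (simp add: left_diff_distrib sum_subtractf)
  also have "\<dots> = (if 1 \<le> i \<and> i \<le> n - 1 then y (n - i) else 0)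
      - (if 2 \<le> i \<and> i \<le> n - 1 then y (n + 1 - i) else 0)"
    using sum_if_eq[of "1 \<le> i \<and> i \<le> n - 1" "n - i" y n] sum_if_eq[of "2 \<le> i \<and> i \<le> n - 1" "n + 1 - i" y n]
    using assms by (auto simp del: One_nat_def)
  finally show ?thesis .
qed

lemma Pm_col:
  assumes "n \<ge> 2"
  shows "(\<Sum>l=1..n. y l * Pm n l j) = (if 1 \<le> j \<and> j \<le> n - 1 then y (n - j) else 0)
      - (if 2 \<le> j \<and> j \<le> n - 1 then y (n + 1 - j) else 0)"
  using Pm_row[OF assms, of j y] Pm_sym[OF assms] by (simp add: mult.commute)

lemma mat_mult_assoc:
  "mat_mult n (mat_mult n X Y) W = mat_mult n X (mat_mult n Y W)"
  unfolding mat_mult_def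
  apply (rule ext, rule ext)
  apply (simp add: sum_distrib_left sum_distrib_right mult.assoc)
  apply (rule sum.swap)
  done

lemma AP: assumes "n \<ge> 2" shows "mat_mult n (Am n) (Pm n) = Idm n"
proof (rule ext, rule ext)
  fix i j
  show "mat_mult n (Am n) (Pm n) i j = Idm n i j"
    unfolding mat_mult_def Pm_col[OF assms] Am_def Idm_def
    by (cases "1 \<le> j \<and> j \<le> n - 1"; cases "2 \<le> j"; cases "1 \<le> i \<and> i \<le> j"; cases "i = j"; simp?; arith?)
qed

lemma PA: assumes "n \<ge> 2" shows "mat_mult n (Pm n) (Am n) = Idm n"
proof (rule ext, rule ext)
  fix i j
  show "mat_mult n (Pm n) (Am n) i j = Idm n i j"
    unfolding mat_mult_def Pm_row[OF assms] Am_def Idm_def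
    by (cases "1 \<le> i \<and> i \<le> n - 1"; cases "2 \<le> i"; cases "1 \<le> j \<and> j \<le> i"; cases "i = j"; simp?; arith?)
qed

lemma ZIm: "mat_mult n Z (Idm n) i j = (if 1 \<le> j \<and> j \<le> n - 1 then Z i j else 0)"
  unfolding mat_mult_def by (subst sum_single[where t=j]) (auto simp: Idm_def)

lemma ImZ: "mat_mult n (Idm n) Z i j = (if 1 \<le> i \<and> i \<le> n - 1 then Z i j else 0)"
  unfolding mat_mult_def by (subst sum_single[where t=i]) (auto simp: Idm_def)



lemma Am_sym: "Am n i j = Am n j i"
  unfolding Am_def by auto

lemma H_eq: "H n Z = (\<Sum>i=1..n. \<Sum>j=1..n. Am n i j * Z i j)"
proof -
  have inner: "(\<Sum>j=1..n. Am n i j * Z i j) = (\<Sum>j=1..n-i. Z i j)" if "i \<in> {1..n}" for i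
    using that by (intro sum.mono_neutral_cong_right) (auto simp: Am_def)
  have "(\<Sum>i=1..n. \<Sum>j=1..n. Am n i j * Z i j) = (\<Sum>i=1..n. \<Sum>j=1..n-i. Z i j)"
    using inner by (rule sum.cong[OF refl])
  also have "\<dots> = (\<Sum>i=1..n-1. \<Sum>j=1..n-i. Z i j)"
  proof (rule sum.mono_neutral_cong_right)
    show "\<forall>i\<in>{1..n} - {1..n - 1}. (\<Sum>j = 1..n - i. Z i j) = 0"
    proof
      fix i assume "i \<in> {1..n} - {1..n - 1}"
      then have "n - i = 0" by auto
      then show "(\<Sum>j = 1..n - i. Z i j) = 0" by simp
    qed
  qed auto
  finally show ?thesis unfolding H_def estar_def by simp
qed

lemma H_diff: "H n (Z1 - Z2) = H n Z1 - H n Z2"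
  unfolding H_def estar_def by (simp add: sum_subtractf)

lemma HXY: "H n (mat_mult n X Y) = (\<Sum>k=1..n. \<Sum>j=1..n. Y k j * mat_mult n (Am n) X j k)"
proof -
  have "H n (mat_mult n X Y) = (\<Sum>i=1..n. \<Sum>j=1..n. \<Sum>k=1..n. Am n i j * X i k * Y k j)"
    unfolding H_eq mat_mult_def by (simp add: sum_distrib_left mult.assoc)
  also have "\<dots> = (\<Sum>i=1..n. \<Sum>j=1..n. \<Sum>k=1..n. Am n j i * X i k * Y k j)"
    by (intro sum.cong refl) (subst Am_sym, rule refl)
  also have "\<dots> = (\<Sum>i=1..n. \<Sum>k=1..n. \<Sum>j=1..n. Am n j i * X i k * Y k j)"
    by (rule sum.cong[OF refl], rule sum.swap)
  also have "\<dots> = (\<Sum>k=1..n. \<Sum>i=1..n. \<Sum>j=1..n. Am n j i * X i k * Y k j)"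
    by (rule sum.swap)
  also have "\<dots> = (\<Sum>k=1..n. \<Sum>j=1..n. \<Sum>i=1..n. Am n j i * X i k * Y k j)"
    by (rule sum.cong[OF refl], rule sum.swap)
  also have "\<dots> = (\<Sum>k=1..n. \<Sum>j=1..n. Y k j * mat_mult n (Am n) X j k)"
    unfolding mat_mult_def by (simp add: sum_distrib_left mult_ac)
  finally show ?thesis .
qed

lemma HYX: "H n (mat_mult n Y X) = (\<Sum>k=1..n. \<Sum>j=1..n. Y k j * mat_mult n X (Am n) j k)"
proof -
  have "H n (mat_mult n Y X) = (\<Sum>i=1..n. \<Sum>j=1..n. \<Sum>k=1..n. Am n i j * Y i k * X k j)"
    unfolding H_eq mat_mult_def by (simp add: sum_distrib_left mult.assoc)
  also have "\<dots> = (\<Sum>i=1..n. \<Sum>j=1..n. \<Sum>k=1..n. Am n j i * Y i k * X k j)"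
    by (intro sum.cong refl) (subst Am_sym, rule refl)
  also have "\<dots> = (\<Sum>i=1..n. \<Sum>k=1..n. \<Sum>j=1..n. Am n j i * Y i k * X k j)"
    by (rule sum.cong[OF refl], rule sum.swap)
  also have "\<dots> = (\<Sum>k=1..n. \<Sum>j=1..n. Y k j * mat_mult n X (Am n) j k)"
    unfolding mat_mult_def by (simp add: sum_distrib_left mult_ac)
  finally show ?thesis .
qed

lemma H_bracket: "H n (bracket n X Y) =
   (\<Sum>k=1..n. \<Sum>j=1..n. Y k j * (mat_mult n (Am n) X j k - mat_mult n X (Am n) j k))"
  unfolding bracket_def H_diff HXY[of n X Y] HYX[of n Y X] by (simp add: sum_subtractf right_diff_distrib)

lemma AX_out: "X \<in> gl n \<Longrightarrow> \<not> (j \<in> {1..n} \<and> k \<in> {1..n}) \<Longrightarrow> mat_mult n (Am n) X j k = 0"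
  unfolding mat_mult_def gl_def Am_def by (intro sum.neutral) auto

lemma XA_out: "X \<in> gl n \<Longrightarrow> \<not> (j \<in> {1..n} \<and> k \<in> {1..n}) \<Longrightarrow> mat_mult n X (Am n) j k = 0"
  unfolding mat_mult_def gl_def Am_def by (intro sum.neutral) auto

lemma Em_gl: "a \<in> {1..n} \<Longrightarrow> b \<in> {1..n} \<Longrightarrow> Em a b \<in> gl n"
  unfolding gl_def Em_def by auto

lemma kerB_char: "X \<in> kerB n (H n) \<longleftrightarrow> X \<in> gl n \<and> mat_mult n (Am n) X = mat_mult n X (Am n)"
proof
  assume "X \<in> gl n \<and> mat_mult n (Am n) X = mat_mult n X (Am n)"
  then show "X \<in> kerB n (H n)" unfolding kerB_def H_bracket by simp
next
  assume X: "X \<in> kerB n (H n)"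
  then have gl: "X \<in> gl n" unfolding kerB_def by simp
  have "mat_mult n (Am n) X j k = mat_mult n X (Am n) j k" for j k
  proof (cases "j \<in> {1..n} \<and> k \<in> {1..n}")
    case True
    let ?D = "\<lambda>j k. mat_mult n (Am n) X j k - mat_mult n X (Am n) j k"
    have "0 = H n (bracket n X (Em k j))"
      using X Em_gl[of k n j] True unfolding kerB_def by auto
    also have "\<dots> = (\<Sum>k'=1..n. \<Sum>j'=1..n. Em k j k' j' * ?D j' k')"
      by (rule H_bracket)
    also have "\<dots> = (\<Sum>k'=1..n. if k' = k then ?D j k' else 0)"
      by (rule sum.cong[OF refl], subst sum_single[where t=j]) (use True in \<open>auto simp: Em_def\<close>)
    also have "\<dots> = ?D j k"
      by (subst sum_single[where t=k]) (use True in auto)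
    finally show ?thesis by simp
  next
    case False
    then show ?thesis using AX_out[OF gl False] XA_out[OF gl False] by simp
  qed
  then show "X \<in> gl n \<and> mat_mult n (Am n) X = mat_mult n X (Am n)" using gl by auto
qed



lemma PZ_entry: "n \<ge> 2 \<Longrightarrow> mat_mult n (Pm n) Z i j = (if 1 \<le> i \<and> i \<le> n - 1 then Z (n - i) j else 0)
      - (if 2 \<le> i \<and> i \<le> n - 1 then Z (n + 1 - i) j else 0)"
  unfolding mat_mult_def by (rule Pm_row)

lemma ZP_entry: "n \<ge> 2 \<Longrightarrow> mat_mult n Z (Pm n) i j = (if 1 \<le> j \<and> j \<le> n - 1 then Z i (n - j) else 0)
      - (if 2 \<le> j \<and> j \<le> n - 1 then Z i (n + 1 - j) else 0)"
  unfolding mat_mult_def by (rule Pm_col)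

lemma Am_row_n: "Am n n l = 0"
  unfolding Am_def by auto

lemma Am_col_n: "Am n l n = 0"
  unfolding Am_def by auto

lemma inj_core:
  assumes n2: "n \<ge> 2" and gl: "Z \<in> gl n" and comm: "mat_mult n (Am n) Z = mat_mult n Z (Am n)"
    and c1: "\<forall>i\<in>{1..n-1}. Z i 1 = 0" and cn: "Z n n = 0"
  shows "Z = 0"
proof -
  let ?m = "n - 1"
  have AZn: "mat_mult n (Am n) Z n l = 0" for l
    unfolding mat_mult_def by (simp add: Am_row_n)
  have ZAn: "mat_mult n Z (Am n) l n = 0" for l
    unfolding mat_mult_def by (simp add: Am_col_n)
  have rown: "Z n j = 0" if "1 \<le> j" "j \<le> ?m" for j
  proof -
    have "Z n j = mat_mult n Z (Idm n) n j" using that by (simp add: ZIm)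
    also have "\<dots> = mat_mult n (mat_mult n Z (Am n)) (Pm n) n j"
      by (simp add: mat_mult_assoc AP[OF n2])
    also have "\<dots> = 0" unfolding comm[symmetric] mat_mult_def[of n "mat_mult n (Am n) Z"]
      using AZn by simp
    finally show ?thesis .
  qed
  have coln: "Z i n = 0" if "1 \<le> i" "i \<le> ?m" for i
  proof -
    have "Z i n = mat_mult n (Idm n) Z i n" using that by (simp add: ImZ)
    also have "\<dots> = mat_mult n (Pm n) (mat_mult n (Am n) Z) i n"
      by (simp add: mat_mult_assoc[symmetric] PA[OF n2])
    also have "\<dots> = 0" unfolding comm mat_mult_def[of n "Pm n"]
      using ZAn by simp
    finally show ?thesis .
  qed
  have ZAP: "mat_mult n Z (mat_mult n (Am n) (Pm n)) = mat_mult n (Am n) (mat_mult n Z (Pm n))"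
    by (metis comm mat_mult_assoc)
  have ident: "mat_mult n (mat_mult n (Pm n) Z) (Idm n) = mat_mult n (Idm n) (mat_mult n Z (Pm n))"
  proof -
    have "mat_mult n (mat_mult n (Pm n) Z) (Idm n) = mat_mult n (Pm n) (mat_mult n Z (mat_mult n (Am n) (Pm n)))"
      by (simp add: mat_mult_assoc AP[OF n2])
    also have "\<dots> = mat_mult n (Pm n) (mat_mult n (Am n) (mat_mult n Z (Pm n)))"
      by (simp add: ZAP)
    also have "\<dots> = mat_mult n (Idm n) (mat_mult n Z (Pm n))"
      by (simp add: mat_mult_assoc[symmetric] PA[OF n2])
    finally show ?thesis .
  qed
  have commPZ: "mat_mult n (Pm n) Z i j = mat_mult n Z (Pm n) i j"
    if "1 \<le> i" "i \<le> ?m" "1 \<le> j" "j \<le> ?m" for i j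
  proof -
    have "mat_mult n (Pm n) Z i j = mat_mult n (mat_mult n (Pm n) Z) (Idm n) i j"
      using that by (simp add: ZIm)
    also have "\<dots> = mat_mult n (Idm n) (mat_mult n Z (Pm n)) i j" by (simp add: ident)
    also have "\<dots> = mat_mult n Z (Pm n) i j" using that by (simp add: ImZ)
    finally show ?thesis .
  qed
  define colz where "colz j \<longleftrightarrow> (\<forall>i. 1 \<le> i \<and> i \<le> ?m \<longrightarrow> Z i j = 0)" for j
  have rel: "Z i (n - j) = (if 2 \<le> j then Z i (n + 1 - j) else 0)"
    if "1 \<le> j" "j \<le> ?m" "colz j" "1 \<le> i" "i \<le> ?m" for i j
  proof -
    have "1 \<le> n - i" "n - i \<le> ?m" using that by auto
    then have "Z (n - i) j = 0" using that(3) unfolding colz_def by blast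
    moreover have "Z (n + 1 - i) j = 0" if "2 \<le> i" 
    proof -
      have "1 \<le> n + 1 - i" "n + 1 - i \<le> ?m" using that \<open>i \<le> ?m\<close> by auto
      then show ?thesis using \<open>colz j\<close> unfolding colz_def by blast
    qed
    ultimately have "mat_mult n (Pm n) Z i j = 0" using that by (simp add: PZ_entry[OF n2])
    then have "mat_mult n Z (Pm n) i j = 0" using commPZ that by simp
    then show ?thesis using that by (simp add: ZP_entry[OF n2] split: if_splits)
  qed
  have ind: "1 \<le> t \<longrightarrow> t \<le> ?m \<longrightarrow> colz t \<and> colz (n - t)" for t
  proof (induction t)
    case 0 then show ?case by simp
  next
    case (Suc t)
    show ?case
    proof (intro impI)
      assume a: "1 \<le> Suc t" "Suc t \<le> ?m"
      show "colz (Suc t) \<and> colz (n - Suc t)"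
      proof (cases "t = 0")
        case True
        have "colz 1" unfolding colz_def using c1 by auto
        moreover have "colz (n - 1)" unfolding colz_def using rel[of 1] \<open>colz 1\<close> n2 by auto
        ultimately show ?thesis using True by simp
      next
        case False
        then have ih: "colz t" "colz (n - t)" using Suc.IH a by auto
        have ct: "colz (Suc t)" unfolding colz_def
        proof (intro allI impI)
          fix i assume i: "1 \<le> i \<and> i \<le> ?m"
          have "Z i (n - (n - t)) = Z i (n + 1 - (n - t))"
            using rel[of "n - t" i] ih i False a by auto
          moreover have "n - (n - t) = t" "n + 1 - (n - t) = Suc t" using a by auto
          ultimately show "Z i (Suc t) = 0" using ih(1) i unfolding colz_def by simp
        qed
        have "colz (n - Suc t)" unfolding colz_def
        proof (intro allI impI)
          fix i assume i: "1 \<le> i \<and> i \<le> ?m"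
          have "Z i (n - Suc t) = Z i (n + 1 - Suc t)"
            using rel[of "Suc t" i] ct i False a by auto
          then show "Z i (n - Suc t) = 0" using ih(2) i unfolding colz_def by simp
        qed
        with ct show ?thesis by simp
      qed
    qed
  qed
  show "Z = 0"
  proof (rule ext, rule ext)
    fix i j
    show "Z i j = 0 i j"
    proof (cases "i \<in> {1..n} \<and> j \<in> {1..n}")
      case False then show ?thesis using gl unfolding gl_def by auto
    next
      case True
      then consider "i \<le> ?m" "j \<le> ?m" | "i = n" "j \<le> ?m" | "i \<le> ?m" "j = n" | "i = n" "j = n"
        by fastforce
      then show ?thesis
      proof cases
        case 1 then show ?thesis using ind[of j] True unfolding colz_def by auto
      next
        case 2 then show ?thesis using rown True by auto
      next
        case 3 then show ?thesis using coln True by auto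
      next
        case 4 then show ?thesis using cn by auto
      qed
    qed
  qed
qed



fun Ppow :: "nat \<Rightarrow> nat \<Rightarrow> cmat" where
  "Ppow n 0 = Idm n"
| "Ppow n (Suc k) = mat_mult n (Pm n) (Ppow n k)"

lemma Ppow_block:
  assumes n2: "n \<ge> 2"
  shows "\<not> (1 \<le> i \<and> i \<le> n - 1 \<and> 1 \<le> j \<and> j \<le> n - 1) \<Longrightarrow> Ppow n k i j = 0"
proof (induction k arbitrary: i j)
  case 0 then show ?case by (auto simp: Idm_def)
next
  case (Suc k)
  show ?case
  proof (cases "1 \<le> i \<and> i \<le> n - 1")
    case False then show ?thesis using False by (simp only: Ppow.simps PZ_entry[OF n2]) auto
  next
    case True
    then have "\<not> (1 \<le> j \<and> j \<le> n - 1)" using Suc.prems by auto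
    then show ?thesis using Suc.IH True by (simp only: Ppow.simps PZ_entry[OF n2]) auto
  qed
qed

lemma Ppow_gl: assumes n2: "n \<ge> 2" shows "Ppow n k \<in> gl n"
  unfolding gl_def mem_Collect_eq
proof (intro allI impI)
  fix i j assume "i \<notin> {1..n} \<or> j \<notin> {1..n}"
  then have "\<not> (1 \<le> i \<and> i \<le> n - 1 \<and> 1 \<le> j \<and> j \<le> n - 1)" by auto
  then show "Ppow n k i j = 0" by (rule Ppow_block[OF n2])
qed

lemma Ppow_comm:
  assumes n2: "n \<ge> 2"
  shows "mat_mult n (Am n) (Ppow n k) = mat_mult n (Ppow n k) (Am n)"
proof (induction k)
  case 0
  show ?case
  proof (rule ext, rule ext)
    fix i j
    show "mat_mult n (Am n) (Ppow n 0) i j = mat_mult n (Ppow n 0) (Am n) i j"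
      by (simp add: ZIm ImZ) (auto simp: Am_def)
  qed
next
  case (Suc k)
  have "mat_mult n (Am n) (Ppow n (Suc k)) = mat_mult n (Idm n) (Ppow n k)"
    by (simp add: mat_mult_assoc[symmetric] AP[OF n2])
  moreover have "mat_mult n (Ppow n (Suc k)) (Am n) = mat_mult n (Idm n) (Ppow n k)"
    by (simp add: mat_mult_assoc Suc.IH[symmetric]) (simp add: mat_mult_assoc[symmetric] PA[OF n2])
  ultimately show ?case by simp
qed

declare Ppow.simps(2)[simp del]

lemma v_rec: "n \<ge> 2 \<Longrightarrow> Ppow n (Suc k) i 1 = (if 1 \<le> i \<and> i \<le> n - 1 then Ppow n k (n - i) 1 else 0)
      - (if 2 \<le> i \<and> i \<le> n - 1 then Ppow n k (n + 1 - i) 1 else 0)"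
  by (simp add: PZ_entry Ppow.simps(2))

definition EvenP :: "nat \<Rightarrow> nat \<Rightarrow> bool" where
  "EvenP n s \<longleftrightarrow> (\<forall>i. s + 1 < i \<longrightarrow> Ppow n (2 * s) i 1 = 0) \<and> Ppow n (2 * s) (s+1) 1 = (-1)^s"
definition OddP :: "nat \<Rightarrow> nat \<Rightarrow> bool" where
  "OddP n s \<longleftrightarrow> (\<forall>i. i < n - 1 - s \<longrightarrow> Ppow n (Suc (2 * s)) i 1 = 0) \<and> Ppow n (Suc (2 * s)) (n - 1 - s) 1 = (-1)^s"

lemma Even0: "n \<ge> 2 \<Longrightarrow> EvenP n 0"
  unfolding EvenP_def by (auto simp: Idm_def)

lemma Even_Odd:
  assumes n2: "n \<ge> 2" and E: "EvenP n s" and b: "2 * s + 1 < n - 1"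
  shows "OddP n s"
proof -
  have z: "Ppow n (2 * s) i 1 = 0" if "s + 1 < i" for i using E that unfolding EvenP_def by auto
  have "Ppow n (Suc (2 * s)) i 1 = 0" if "i < n - 1 - s" for i
  proof (cases "i = 0")
    case True then show ?thesis using True by (intro Ppow_block[OF n2]) auto
  next
    case False
    have "Ppow n (2 * s) (n - i) 1 = 0" using that b False by (intro z) auto
    moreover have "Ppow n (2 * s) (n + 1 - i) 1 = 0" using that b False by (intro z) auto
    ultimately show ?thesis by (subst v_rec[OF n2]) simp
  qed
  moreover have "Ppow n (Suc (2 * s)) (n - 1 - s) 1 = (-1)^s"
  proof -
    have "n - (n - 1 - s) = s + 1" using b by auto
    moreover have "n + 1 - (n - 1 - s) = s + 2" using b by auto
    moreover have "Ppow n (2 * s) (s + 2) 1 = 0" by (intro z) auto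
    moreover have "Ppow n (2 * s) (s + 1) 1 = (-1)^s" using E unfolding EvenP_def by simp
    moreover have "1 \<le> n - 1 - s" "n - 1 - s \<le> n - 1" "2 \<le> n - 1 - s" using b by auto
    ultimately show ?thesis by (subst v_rec[OF n2]) simp
  qed
  ultimately show ?thesis unfolding OddP_def by auto
qed

lemma Odd_Even:
  assumes n2: "n \<ge> 2" and O: "OddP n s" and b: "2 * s + 2 < n - 1"
  shows "EvenP n (Suc s)"
proof -
  have z: "Ppow n (Suc (2 * s)) i 1 = 0" if "i < n - 1 - s" for i using O that unfolding OddP_def by auto
  have e2: "2 * Suc s = Suc (Suc (2 * s))" by simp
  have "Ppow n (2 * (Suc s)) i 1 = 0" if "Suc s + 1 < i" for i
  proof (cases "i \<le> n - 1")
    case False then show ?thesis using False by (intro Ppow_block[OF n2]) auto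
  next
    case True
    have "Ppow n (Suc (2 * s)) (n - i) 1 = 0" using that b True by (intro z) auto
    moreover have "Ppow n (Suc (2 * s)) (n + 1 - i) 1 = 0" using that b True by (intro z) auto
    ultimately show ?thesis unfolding e2 by (subst v_rec[OF n2]) simp
  qed
  moreover have "Ppow n (2 * (Suc s)) (Suc s + 1) 1 = (-1)^(Suc s)"
  proof -
    have "n - (s + 2) = n - 1 - s - 1" using b by auto
    moreover have "n + 1 - (s + 2) = n - 1 - s" using b by auto
    moreover have "Ppow n (Suc (2 * s)) (n - 1 - s - 1) 1 = 0" using b by (intro z) auto
    moreover have "Ppow n (Suc (2 * s)) (n - 1 - s) 1 = (-1)^s" using O unfolding OddP_def by simp
    moreover have "1 \<le> s + 2" "s + 2 \<le> n - 1" using b by auto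
    ultimately show ?thesis unfolding e2 by (subst v_rec[OF n2]) simp
  qed
  ultimately show ?thesis unfolding EvenP_def by auto
qed

lemma supports:
  assumes n2: "n \<ge> 2"
  shows "(2 * s < n - 1 \<longrightarrow> EvenP n s) \<and> (2 * s + 1 < n - 1 \<longrightarrow> OddP n s)"
proof (induction s)
  case 0 then show ?case using Even0[OF n2] Even_Odd[OF n2] by simp
next
  case (Suc s)
  have E: "2 * Suc s < n - 1 \<longrightarrow> EvenP n (Suc s)"
    using Suc.IH Odd_Even[OF n2, of s] by auto
  moreover have "2 * Suc s + 1 < n - 1 \<longrightarrow> OddP n (Suc s)"
    using E Even_Odd[OF n2, of "Suc s"] by auto
  ultimately show ?case by blast
qed



definition lead :: "nat \<Rightarrow> nat \<Rightarrow> nat" where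
  "lead n k = (if even k then k div 2 + 1 else n - 1 - k div 2)"

lemma Ppow_even0: "n \<ge> 2 \<Longrightarrow> 2 * s < n - 1 \<Longrightarrow> s + 1 < i \<Longrightarrow> Ppow n (2 * s) i 1 = 0"
  using supports[of n s] unfolding EvenP_def by auto
lemma Ppow_even1: "n \<ge> 2 \<Longrightarrow> 2 * s < n - 1 \<Longrightarrow> Ppow n (2 * s) (s + 1) 1 = (-1)^s"
  using supports[of n s] unfolding EvenP_def by auto
lemma Ppow_odd0: "n \<ge> 2 \<Longrightarrow> 2 * s + 1 < n - 1 \<Longrightarrow> i < n - 1 - s \<Longrightarrow> Ppow n (Suc (2 * s)) i 1 = 0"
  using supports[of n s] unfolding OddP_def by auto
lemma Ppow_odd1: "n \<ge> 2 \<Longrightarrow> 2 * s + 1 < n - 1 \<Longrightarrow> Ppow n (Suc (2 * s)) (n - 1 - s) 1 = (-1)^s"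
  using supports[of n s] unfolding OddP_def by auto

lemma even_odd_split: obtains s where "k = 2 * s" | s where "k = Suc (2 * s)"
proof (cases "even k")
  case True
  then obtain s where "k = 2 * s" by (rule evenE)
  then show ?thesis by (rule that(1))
next
  case False
  then obtain s where "k = 2 * s + 1" by (rule oddE)
  then show ?thesis using that(2) by simp
qed

lemma lead_nz: assumes n2: "n \<ge> 2" and k: "k < n - 1" shows "Ppow n k (lead n k) 1 \<noteq> 0"
proof (cases k rule: even_odd_split)
  case (1 s)
  then show ?thesis using Ppow_even1[OF n2, of s] k by (simp add: lead_def)
next
  case (2 s)
  then show ?thesis using Ppow_odd1[OF n2, of s] k by (simp add: lead_def)
qed

lemma lead_zero: assumes n2: "n \<ge> 2" and jk: "j < k" and k: "k < n - 1"
  shows "Ppow n j (lead n k) 1 = 0"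
proof (cases k rule: even_odd_split)
  case (1 s)
  then have l: "lead n k = s + 1" by (simp add: lead_def)
  show ?thesis
  proof (cases j rule: even_odd_split)
    case (1 t)
    have ts: "t < s" using jk \<open>j = 2 * t\<close> \<open>k = 2 * s\<close> by simp
    have b1: "2 * t < n - 1" using ts k \<open>k = 2 * s\<close> by simp
    have b2: "t + 1 < s + 1" using ts by simp
    show ?thesis unfolding l \<open>j = 2 * t\<close> by (rule Ppow_even0[OF n2 b1 b2])
  next
    case (2 t)
    have ts: "2 * t + 1 < 2 * s" using jk \<open>j = Suc (2 * t)\<close> \<open>k = 2 * s\<close> by simp
    have b1: "2 * t + 1 < n - 1" using ts k \<open>k = 2 * s\<close> by simp
    have b2: "s + 1 < n - 1 - t" using ts k \<open>k = 2 * s\<close> by simp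
    show ?thesis unfolding l \<open>j = Suc (2 * t)\<close> by (rule Ppow_odd0[OF n2 b1 b2])
  qed
next
  case (2 s)
  then have l: "lead n k = n - 1 - s" by (simp add: lead_def)
  show ?thesis
  proof (cases j rule: even_odd_split)
    case (1 t)
    have ts: "t \<le> s" using jk \<open>j = 2 * t\<close> \<open>k = Suc (2 * s)\<close> by simp
    have b1: "2 * t < n - 1" using ts k \<open>k = Suc (2 * s)\<close> by simp
    have b2: "t + 1 < n - 1 - s" using ts k \<open>k = Suc (2 * s)\<close> by simp
    show ?thesis unfolding l \<open>j = 2 * t\<close> by (rule Ppow_even0[OF n2 b1 b2])
  next
    case (2 t)
    have ts: "t < s" using jk \<open>j = Suc (2 * t)\<close> \<open>k = Suc (2 * s)\<close> by simp
    have b1: "2 * t + 1 < n - 1" using ts k \<open>k = Suc (2 * s)\<close> by simp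
    have b2: "n - 1 - s < n - 1 - t" using ts k \<open>k = Suc (2 * s)\<close> by simp
    show ?thesis unfolding l \<open>j = Suc (2 * t)\<close> by (rule Ppow_odd0[OF n2 b1 b2])
  qed
qed

lemma tri:
  assumes n2: "n \<ge> 2" and h: "\<And>i. (\<Sum>k<n-1. c k * Ppow n k i 1) = 0"
  shows "\<forall>k<n-1. c k = 0"
proof (rule ccontr)
  assume "\<not> (\<forall>k<n-1. c k = 0)"
  then have ne: "{k. k < n-1 \<and> c k \<noteq> 0} \<noteq> {}" by auto
  have fin: "finite {k. k < n-1 \<and> c k \<noteq> 0}" by auto
  define K where "K = Max {k. k < n-1 \<and> c k \<noteq> 0}"
  have K: "K < n-1" "c K \<noteq> 0" using Max_in[OF fin ne] unfolding K_def by auto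
  have big: "c k = 0" if "k < n-1" "K < k" for k
  proof (rule ccontr)
    assume "c k \<noteq> 0"
    then have "k \<le> K" unfolding K_def using that by (intro Max_ge[OF fin]) auto
    with that show False by simp
  qed
  have "(\<Sum>k<n-1. c k * Ppow n k (lead n K) 1) = c K * Ppow n K (lead n K) 1 + (\<Sum>k\<in>{..<n-1} - {K}. c k * Ppow n k (lead n K) 1)"
    using K by (subst sum.remove[of _ K]) auto
  also have "(\<Sum>k\<in>{..<n-1} - {K}. c k * Ppow n k (lead n K) 1) = 0"
  proof (rule sum.neutral, rule ballI)
    fix k assume "k \<in> {..<n-1} - {K}"
    then have "k < K \<or> K < k" "k < n - 1" by auto
    then show "c k * Ppow n k (lead n K) 1 = 0"
    proof (cases "k < K")
      case True then show ?thesis using lead_zero[OF n2 True K(1)] by simp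
    next
      case False then have "K < k" using \<open>k < K \<or> K < k\<close> by simp
      then show ?thesis using big \<open>k < n - 1\<close> by simp
    qed
  qed
  finally have "c K * Ppow n K (lead n K) 1 = 0" using h by simp
  then show False using K lead_nz[OF n2 K(1)] by simp
qed



lemma vs: "vector_space mscale"
  by unfold_locales (auto simp: mscale_def fun_eq_iff algebra_simps)

lemma mm_add_r: "mat_mult n A (X + Y) = mat_mult n A X + mat_mult n A Y"
  unfolding mat_mult_def by (simp add: fun_eq_iff algebra_simps sum.distrib)
lemma mm_add_l: "mat_mult n (X + Y) A = mat_mult n X A + mat_mult n Y A"
  unfolding mat_mult_def by (simp add: fun_eq_iff algebra_simps sum.distrib)
lemma mm_scale_r: "mat_mult n A (mscale c X) = mscale c (mat_mult n A X)"
  unfolding mat_mult_def mscale_def by (simp add: fun_eq_iff sum_distrib_left mult_ac)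
lemma mm_scale_l: "mat_mult n (mscale c X) A = mscale c (mat_mult n X A)"
  unfolding mat_mult_def mscale_def by (simp add: fun_eq_iff sum_distrib_left mult_ac)

lemma sum_apply2: "(\<Sum>x\<in>S. g x) a b = (\<Sum>x\<in>S. (g x a b :: complex))"
proof (induction S rule: infinite_finite_induct)
  case (infinite A) then show ?case by simp
next
  case empty then show ?case by simp
next
  case (insert x F) then show ?case by simp
qed

lemma kerB_subspace: "module.subspace mscale (kerB n (H n))"
proof -
  interpret V: vector_space mscale by (rule vs)
  show ?thesis unfolding V.subspace_def
  proof (intro conjI ballI allI)
    show "0 \<in> kerB n (H n)" unfolding kerB_char
      by (simp add: gl_def mat_mult_def fun_eq_iff)
  next
    fix X Y assume "X \<in> kerB n (H n)" "Y \<in> kerB n (H n)"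
    then show "X + Y \<in> kerB n (H n)" unfolding kerB_char
      by (simp add: gl_def mm_add_r mm_add_l)
  next
    fix c X assume "X \<in> kerB n (H n)"
    then show "mscale c X \<in> kerB n (H n)" unfolding kerB_char
      by (simp add: gl_def mm_scale_r mm_scale_l) (simp add: mscale_def)
  qed
qed

lemma Em_ker: "n \<ge> 2 \<Longrightarrow> Em n n \<in> kerB n (H n)"
proof -
  assume n2: "n \<ge> 2"
  have "mat_mult n (Am n) (Em n n) = 0"
    unfolding mat_mult_def by (rule ext, rule ext, simp, rule sum.neutral) (auto simp: Em_def Am_col_n)
  moreover have "mat_mult n (Em n n) (Am n) = 0"
    unfolding mat_mult_def by (rule ext, rule ext, simp, rule sum.neutral) (auto simp: Em_def Am_row_n)
  ultimately show ?thesis unfolding kerB_char using Em_gl[of n n n] n2 by simp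
qed

lemma Ppow_ker: "n \<ge> 2 \<Longrightarrow> Ppow n k \<in> kerB n (H n)"
  unfolding kerB_char using Ppow_gl Ppow_comm by blast

definition proj :: "nat \<Rightarrow> cmat \<Rightarrow> cmat" where
  "proj n X = (\<lambda>i j. if (j = 1 \<and> 1 \<le> i \<and> i \<le> n - 1) \<or> (i = n \<and> j = n) then X i j else 0)"

lemma proj_hom: "module_hom mscale mscale (proj n)"
  unfolding module_hom_iff module_iff_vector_space using vs
  by (auto simp: proj_def mscale_def fun_eq_iff)

lemma proj_inj: assumes n2: "n \<ge> 2" shows "inj_on (proj n) (kerB n (H n))"
proof (rule inj_onI)
  interpret V: vector_space mscale by (rule vs)
  fix X Y assume X: "X \<in> kerB n (H n)" and Y: "Y \<in> kerB n (H n)" and e: "proj n X = proj n Y"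
  have Z: "X - Y \<in> kerB n (H n)" using V.subspace_diff[OF kerB_subspace X Y] .
  have c1: "\<forall>i\<in>{1..n-1}. (X - Y) i 1 = 0"
  proof
    fix i assume "i \<in> {1..n-1}"
    then have "proj n X i 1 = X i 1" "proj n Y i 1 = Y i 1" by (auto simp: proj_def)
    then show "(X - Y) i 1 = 0" using e by simp
  qed
  have cn: "(X - Y) n n = 0"
  proof -
    have "proj n X n n = X n n" "proj n Y n n = Y n n" by (auto simp: proj_def)
    then show ?thesis using e by simp
  qed
  have "X - Y = 0" using Z c1 cn inj_core[OF n2] unfolding kerB_char by blast
  then show "X = Y" by simp
qed

lemma proj_span:
  assumes n2: "n \<ge> 2"
  shows "proj n X \<in> module.span mscale ((\<lambda>i. Em i 1) ` {1..n-1} \<union> {Em n n})"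
proof -
  interpret V: vector_space mscale by (rule vs)
  let ?W = "(\<lambda>i. Em i 1) ` {1..n-1} \<union> {Em n n}"
  have eq: "proj n X = (\<Sum>i\<in>{1..n-1}. mscale (X i 1) (Em i 1)) + mscale (X n n) (Em n n)"
  proof (rule ext, rule ext)
    fix a b
    have "(\<Sum>i\<in>{1..n-1}. mscale (X i 1) (Em i 1)) a b = (\<Sum>i\<in>{1..n-1}. X i 1 * Em i 1 a b)"
      by (simp add: sum_apply2 mscale_def)
    also have "\<dots> = (if b = 1 \<and> 1 \<le> a \<and> a \<le> n - 1 then X a 1 else 0)"
    proof (cases "b = 1")
      case True
      have "(\<Sum>i\<in>{1..n-1}. X i 1 * Em i 1 a b) = (if 1 \<le> a \<and> a \<le> n - 1 then X a 1 * Em a 1 a b else 0)"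
        by (rule sum_single) (auto simp: Em_def)
      then show ?thesis using True by (simp add: Em_def)
    next
      case False then show ?thesis by (simp add: Em_def)
    qed
    finally show "proj n X a b = ((\<Sum>i\<in>{1..n-1}. mscale (X i 1) (Em i 1)) + mscale (X n n) (Em n n)) a b"
      using n2 by (auto simp: proj_def mscale_def Em_def)
  qed
  show ?thesis unfolding eq
    by (intro V.span_add V.span_sum V.span_scale V.span_base) auto
qed



theorem theorem3p18:
  fixes n :: nat
  assumes "n \<ge> 2"
  shows "vector_space.dim mscale (kerB n (H n)) = n"
proof -
  have n2: "n \<ge> 2" by (rule assms)
  interpret V: vector_space mscale by (rule vs)
  interpret F: module_hom mscale mscale "proj n" by (rule proj_hom)
  let ?K = "kerB n (H n)"
  let ?W = "(\<lambda>i. Em i 1) ` {1..n-1} \<union> {Em n n}"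
  have sub: "V.subspace ?K" by (rule kerB_subspace)
  obtain C where C: "C \<subseteq> ?K" "V.independent C" "?K \<subseteq> V.span C" "card C = V.dim ?K"
    by (rule V.basis_exists)
  have spanC: "V.span C \<subseteq> ?K" by (rule V.span_minimal[OF C(1) sub])
  have injC: "inj_on (proj n) (V.span C)" using inj_on_subset[OF proj_inj[OF n2] spanC] .
  have indepF: "V.independent (proj n ` C)" using F.independent_injective_image[OF C(2) injC] .
  have finW: "finite ?W" by simp
  have cardW: "card ?W \<le> n"
  proof -
    have "card ?W \<le> card ((\<lambda>i. Em i 1) ` {1..n-1}) + card {Em n n}" by (rule card_Un_le)
    also have "\<dots> \<le> card {1..n-1} + 1" using card_image_le[of "{1..n-1}" "\<lambda>i. Em i 1"] by simp
    also have "\<dots> = n" using n2 by simp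
    finally show ?thesis .
  qed
  have "proj n ` C \<subseteq> V.span ?W" using proj_span[OF n2] by auto
  from V.independent_span_bound[OF finW indepF this]
  have fin: "finite (proj n ` C)" "card (proj n ` C) \<le> card ?W" by auto
  have injC': "inj_on (proj n) C" using inj_on_subset[OF injC V.span_superset] .
  have "card (proj n ` C) = card C" by (rule card_image[OF injC'])
  then have upper: "card C \<le> n" using fin cardW by simp
  have finC: "finite C" using finite_imageD[OF fin(1) injC'] .
  let ?B = "Ppow n ` {..<n-1} \<union> {Em n n}"
  have Bsub: "?B \<subseteq> ?K" using Ppow_ker[OF n2] Em_ker[OF n2] by auto
  have injP: "inj_on (Ppow n) {..<n-1}"
  proof (rule inj_onI)
    fix j k assume j: "j \<in> {..<n-1}" and k: "k \<in> {..<n-1}" and e: "Ppow n j = Ppow n k"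
    show "j = k"
    proof (rule ccontr)
      assume "j \<noteq> k"
      then consider "j < k" | "k < j" by linarith
      then show False
      proof cases
        case 1
        then show False using lead_zero[OF n2 1] lead_nz[OF n2, of k] k e by auto
      next
        case 2
        then show False using lead_zero[OF n2 2] lead_nz[OF n2, of j] j e by auto
      qed
    qed
  qed
  have Ppow_nn: "Ppow n k n n = 0" for k using Ppow_block[OF n2] by simp
  have notin: "Em n n \<notin> Ppow n ` {..<n-1}"
  proof
    assume "Em n n \<in> Ppow n ` {..<n-1}"
    then obtain k where "Em n n = Ppow n k" by auto
    then have "Em n n n n = Ppow n k n n" by simp
    then show False using Ppow_nn[of k] by (simp add: Em_def)
  qed
  have finB: "finite ?B" by simp
  have cardB: "card ?B = n"
    using notin card_image[OF injP] n2 by simp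
  have indepB: "V.independent ?B"
  proof
    assume "V.dependent ?B"
    then obtain u where u: "\<exists>v\<in>?B. u v \<noteq> 0" "(\<Sum>v\<in>?B. mscale (u v) v) = 0"
      using V.dependent_finite[OF finB] by auto
    have sumeq: "(\<Sum>v\<in>?B. mscale (u v) v) = (\<Sum>k<n-1. mscale (u (Ppow n k)) (Ppow n k)) + mscale (u (Em n n)) (Em n n)"
    proof -
      have "(\<Sum>v\<in>?B. mscale (u v) v) = (\<Sum>v\<in>Ppow n ` {..<n-1}. mscale (u v) v) + (\<Sum>v\<in>{Em n n}. mscale (u v) v)"
        using notin by (intro sum.union_disjoint) auto
      also have "(\<Sum>v\<in>Ppow n ` {..<n-1}. mscale (u v) v) = (\<Sum>k<n-1. mscale (u (Ppow n k)) (Ppow n k))"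
        by (rule sum.reindex[OF injP, unfolded comp_def])
      also have "(\<Sum>v\<in>{Em n n}. mscale (u v) v) = mscale (u (Em n n)) (Em n n)" by simp
      finally show ?thesis .
    qed
    have z: "(\<Sum>k<n-1. mscale (u (Ppow n k)) (Ppow n k)) + mscale (u (Em n n)) (Em n n) = 0"
      using u(2) sumeq by simp
    have e1: "(\<Sum>k<n-1. u (Ppow n k) * Ppow n k i 1) = 0" for i
    proof -
      have "((\<Sum>k<n-1. mscale (u (Ppow n k)) (Ppow n k)) + mscale (u (Em n n)) (Em n n)) i 1 = 0"
        using z by simp
      then show ?thesis using n2 by (simp add: sum_apply2 mscale_def Em_def)
    qed
    have c0: "\<forall>k<n-1. u (Ppow n k) = 0" by (rule tri[OF n2 e1])
    have "((\<Sum>k<n-1. mscale (u (Ppow n k)) (Ppow n k)) + mscale (u (Em n n)) (Em n n)) n n = 0"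
      using z by simp
    then have d0: "u (Em n n) = 0" using c0 by (simp add: sum_apply2 mscale_def Em_def)
    show False using u(1) c0 d0 by auto
  qed
  have "card ?B \<le> card C"
    using V.independent_span_bound[OF finC indepB] Bsub C(3) by auto
  then show ?thesis using upper cardB C(4) by simp
qed

end
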